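(* Let $\mathbf{X}$ be a finitely supported real random variable with $\mathbf{E}[\mathbf{X}]=0$ and $\mathrm{Var}[\mathbf{X}]=1$. Let $q_1(x_1,\dots,x_{ds})$ be a multilinear polynomial of degree at most $d$ with $\|q_1\|_{\mathrm{coeff}}=1$, and let $q_2(x_1,\dots,x_N)$ (with $N\ge ds$) be a multilinear polynomial of degree at most $d$ such that $\|q_1-q_2\|_{\mathrm{coeff}}\le\eta\le1$ (viewing both as polynomials in $x_1,\dots,x_N$). Then for any positive integer $k$ there exists a value $\xi_{k,d,\mathbf{X}}$, depending only on $k$, $d$ and $\mathbf{X}$, such that \[ \mathrm{Mom}_k\big(q_1(\mathbf{X}^{\otimes ds}),q_2(\mathbf{X}^{\otimes N})\big)\le\xi_{k,d,\mathbf{X}}\cdot\eta . \]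
   Context: A multilinear polynomial of degree at most $d$ is $p(x)=\sum_{|S|\le d}\widehat{p}(S)\prod_{i\in S}x_i$ and $\|p\|_{\mathrm{coeff}}=(\sum_S\widehat{p}(S)^2)^{1/2}$. For real random variables $\mathbf{Y},\mathbf{Z}$ with finite moments, $\mathrm{Mom}_k(\mathbf{Y},\mathbf{Z})=\big(\sum_{i=1}^k(\mathbf{E}[\mathbf{Y}^i]-\mathbf{E}[\mathbf{Z}^i])^2\big)^{1/2}$. $\mathbf{X}^{\otimes m}$ is a vector of $m$ i.i.d. copies of $\mathbf{X}$. *)

theory Defs
  imports "HOL-Probability.Probability"
begin

text \<open>A multilinear polynomial in variables x_0,...,x_(n-1) is represented by its
  coefficient function on finite sets of variable indices.\<close>

definition is_mlpoly :: "nat \<Rightarrow> nat \<Rightarrow> (nat set \<Rightarrow> real) \<Rightarrow> bool" where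
  "is_mlpoly n d c \<longleftrightarrow> (\<forall>S. c S \<noteq> 0 \<longrightarrow> S \<subseteq> {..<n} \<and> card S \<le> d)"

definition mpoly_eval :: "nat \<Rightarrow> (nat set \<Rightarrow> real) \<Rightarrow> (nat \<Rightarrow> real) \<Rightarrow> real" where
  "mpoly_eval n c x = (\<Sum>S\<in>Pow {..<n}. c S * (\<Prod>i\<in>S. x i))"

definition coeff_norm :: "nat \<Rightarrow> (nat set \<Rightarrow> real) \<Rightarrow> real" where
  "coeff_norm n c = sqrt (\<Sum>S\<in>Pow {..<n}. (c S)^2)"

definition poly_dist :: "real pmf \<Rightarrow> nat \<Rightarrow> (nat set \<Rightarrow> real) \<Rightarrow> real pmf" where
  "poly_dist X n c = map_pmf (mpoly_eval n c) (Pi_pmf {..<n} 0 (\<lambda>_. X))"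

definition Mom :: "nat \<Rightarrow> real pmf \<Rightarrow> real pmf \<Rightarrow> real" where
  "Mom k Y Z = sqrt (\<Sum>i=1..k. (measure_pmf.expectation Y (\<lambda>y. y ^ i)
                                 - measure_pmf.expectation Z (\<lambda>z. z ^ i))^2)"

end

theory Submission
  imports Defs
begin


lemma NI_norm:
  fixes a b :: "nat \<Rightarrow> real" and q :: nat and M K :: real
  assumes a0: "\<And>t. a t \<ge> 0" and b0: "\<And>t. b t \<ge> 0" and M1: "M \<ge> 1"
    and K: "K \<ge> 2^(q+1) * M^q"
    and norm: "\<And>t. t < q \<Longrightarrow> K * (a t)^2 + (b t)^2 = 1"
  shows "(\<Sum>T\<in>Pow {..<q}. (if card T = 1 then 0 else M^card T) *
            ((\<Prod>t\<in>T. a t) * (\<Prod>t\<in>{..<q}-T. b t))) \<le> 1"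
proof (cases "q = 0")
  case True
  then show ?thesis by simp
next
  case False
  define g where "g T = (if card T = 1 then 0 else M^card T) *
            ((\<Prod>t\<in>T. a t) * (\<Prod>t\<in>{..<q}-T. b t))" for T
  have Kpos: "K \<ge> 1"
  proof -
    have "(1::real) \<le> 2^(q+1)" by (rule one_le_power) simp
    moreover have "1 \<le> M^q" using M1 by simp
    ultimately have "1 \<le> (2::real)^(q+1) * M^q" by (metis mult_mono one_le_numeral one_le_power mult_1 order_trans zero_le_one)
    then show ?thesis using K by linarith
  qed
  obtain t0 where t0: "t0 < q" "\<And>t. t < q \<Longrightarrow> a t \<le> a t0"
  proof -
    have "finite (a ` {..<q})" "a ` {..<q} \<noteq> {}" using False by auto
    then have "Max (a ` {..<q}) \<in> a ` {..<q}" by (rule Max_in)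
    then obtain t0 where "t0 < q" "a t0 = Max (a ` {..<q})" by auto
    then show ?thesis using that by auto
  qed
  define U where "U = a t0"
  have U0: "U \<ge> 0" using a0 U_def by auto
  have nt0: "K * U^2 + (b t0)^2 = 1" using norm t0 U_def by auto
  have KU: "K * U^2 \<le> 1" using nt0 zero_le_power2[of "b t0"] by linarith
  have U1: "U \<le> 1"
  proof -
    have "U^2 \<le> K * U^2" using Kpos mult_right_mono[of 1 K "U^2"] by simp
    then have "U^2 \<le> 1" using KU by linarith
    then show ?thesis using U0 by (simp add: power_le_one_iff)
  qed
  have bt1: "b t \<le> 1" if "t < q" for t
  proof -
    have "K * (a t)^2 \<ge> 0" using Kpos by simp
    then have "(b t)^2 \<le> 1" using norm[OF that] by linarith
    then show ?thesis using b0[of t] by (simp add: power_le_one_iff)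
  qed
  have at: "a t \<le> U" if "t < q" for t using t0 that U_def by auto
  have g0: "g {} \<le> 1 - K * U^2 / 2"
  proof -
    have "(\<Prod>t\<in>{..<q}. b t) = b t0 * (\<Prod>t\<in>{..<q}-{t0}. b t)"
      using t0 by (simp add: prod.remove)
    also have "\<dots> \<le> b t0 * 1"
      apply (rule mult_left_mono)
       apply (rule prod_le_1) using b0 bt1 by auto
    finally have "(\<Prod>t\<in>{..<q}. b t) \<le> b t0" by simp
    moreover have "b t0 \<le> 1 - K * U^2 / 2"
    proof -
      have "(1 - b t0) * (1 + b t0) = K * U^2" using nt0 by (simp add: algebra_simps power2_eq_square)
      moreover have "0 \<le> 1 - b t0" using bt1 t0 by auto
      moreover have "(1 - b t0) * (1 + b t0) \<le> (1 - b t0) * 2"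
        apply (rule mult_left_mono) using bt1[OF t0(1)] \<open>0 \<le> 1 - b t0\<close> by auto
      ultimately have h: "K * U^2 \<le> (1 - b t0) * 2" by linarith
      have "(1 - b t0) * 2 = 2 - 2 * b t0" by simp
      then show ?thesis using h by linarith
    qed
    ultimately show ?thesis by (simp add: g_def)
  qed
  have gT: "g T \<le> M^q * U^2" if "T \<in> Pow {..<q}" "T \<noteq> {}" for T
  proof (cases "card T = 1")
    case True
    have "0 \<le> M^q * U^2" using M1 by simp
    then show ?thesis using True by (simp add: g_def)
  next
    case False
    have fT: "finite T" using that finite_subset by auto
    then have c2: "card T \<ge> 2" using False that card_0_eq by fastforce
    have cq: "card T \<le> q" using that card_mono[of "{..<q}" T] by auto
    have p1: "(\<Prod>t\<in>T. a t) \<le> U ^ card T"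
      using prod_mono[of T "\<lambda>t. a t" "\<lambda>_. U"] a0 at that by auto
    have p2: "U ^ card T \<le> U^2" using power_decreasing[OF c2 U0 U1] .
    have p3: "(\<Prod>t\<in>{..<q}-T. b t) \<le> 1" by (rule prod_le_1) (use b0 bt1 in auto)
    have p4: "M ^ card T \<le> M^q" using power_increasing[OF cq M1] .
    have "(\<Prod>t\<in>T. a t) * (\<Prod>t\<in>{..<q}-T. b t) \<le> U^2 * 1"
      apply (rule mult_mono) using p1 p2 p3 a0 b0 by (auto intro: prod_nonneg)
    then have "M ^ card T * ((\<Prod>t\<in>T. a t) * (\<Prod>t\<in>{..<q}-T. b t)) \<le> M^q * U^2"
      apply - apply (rule mult_mono) using p4 M1 a0 b0 by (auto intro!: prod_nonneg mult_nonneg_nonneg)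
    then show ?thesis using False by (simp add: g_def)
  qed
  have "(\<Sum>T\<in>Pow {..<q}. g T) = g {} + (\<Sum>T\<in>Pow {..<q} - {{}}. g T)"
    by (simp add: sum.remove)
  also have "\<dots> \<le> (1 - K * U^2 / 2) + (\<Sum>T\<in>Pow {..<q} - {{}}. M^q * U^2)"
    apply (rule add_mono[OF g0]) apply (rule sum_mono) using gT by auto
  also have "\<dots> \<le> (1 - K * U^2 / 2) + (\<Sum>T\<in>Pow {..<q}. M^q * U^2)"
    apply (rule add_left_mono) apply (rule sum_mono2) using M1 by auto
  also have "\<dots> = 1 - K * U^2 / 2 + 2^q * M^q * U^2" by (simp add: card_Pow)
  also have "\<dots> \<le> 1"
  proof -
    have "2^(q+1) * M^q * U^2 \<le> K * U^2" using K by (simp add: mult_right_mono)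
    then show ?thesis by simp
  qed
  finally show ?thesis by (simp add: g_def)
qed

lemma NI:
  fixes a b :: "nat \<Rightarrow> real" and q :: nat and M K :: real
  assumes a0: "\<And>t. a t \<ge> 0" and b0: "\<And>t. b t \<ge> 0" and M1: "M \<ge> 1"
    and K: "K \<ge> 2^(q+1) * M^q"
  shows "(\<Sum>T\<in>Pow {..<q}. (if card T = 1 then 0 else M^card T) *
            ((\<Prod>t\<in>T. a t) * (\<Prod>t\<in>{..<q}-T. b t))) \<le> (\<Prod>t<q. sqrt (K * (a t)^2 + (b t)^2))"
proof -
  have Kpos: "K \<ge> 1"
  proof -
    have "(1::real) \<le> 2^(q+1)" by (rule one_le_power) simp
    moreover have "1 \<le> M^q" using M1 by simp
    ultimately have "1 \<le> (2::real)^(q+1) * M^q" by (metis mult_mono one_le_numeral one_le_power mult_1 order_trans zero_le_one)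
    then show ?thesis using K by linarith
  qed
  define r where "r t = sqrt (K * (a t)^2 + (b t)^2)" for t
  have r0: "r t \<ge> 0" for t using Kpos unfolding r_def by simp
  show ?thesis
  proof (cases "\<exists>t<q. r t = 0")
    case True
    then obtain t where t: "t < q" "r t = 0" by auto
    have "K * (a t)^2 + (b t)^2 = 0" using t(2) unfolding r_def by simp
    moreover have "K * (a t)^2 \<ge> 0" using Kpos by simp
    ultimately have "K * (a t)^2 = 0 \<and> (b t)^2 = 0"
      using add_nonneg_eq_0_iff[of "K * (a t)^2" "(b t)^2"] by simp
    then have "K * (a t)^2 = 0" "(b t)^2 = 0" by auto
    then have ab: "a t = 0" "b t = 0" using Kpos by auto
    have z: "(\<Prod>t\<in>T. a t) * (\<Prod>t\<in>{..<q}-T. b t) = 0" if "T \<in> Pow {..<q}" for T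
    proof (cases "t \<in> T")
      case True
      have "finite T" using that finite_subset by auto
      then show ?thesis using True ab by (simp add: prod_zero_iff) blast
    next
      case False
      then show ?thesis using t ab by (simp add: prod_zero_iff) blast
    qed
    have "(\<Sum>T\<in>Pow {..<q}. (if card T = 1 then 0 else M^card T) *
            ((\<Prod>t\<in>T. a t) * (\<Prod>t\<in>{..<q}-T. b t))) = 0"
      by (rule sum.neutral) (use z in auto)
    moreover have "(\<Prod>t<q. sqrt (K * (a t)^2 + (b t)^2)) \<ge> 0"
      using r0 unfolding r_def by (simp add: prod_nonneg)
    ultimately show ?thesis by simp
  next
    case False
    then have rp: "t < q \<Longrightarrow> r t > 0" for t using r0 by (metis order_le_less)
    define a' where "a' t = a t / r t" for t
    define b' where "b' t = b t / r t" for t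
    have nrm: "K * (a' t)^2 + (b' t)^2 = 1" if "t < q" for t
    proof -
      have "(r t)^2 = K * (a t)^2 + (b t)^2" unfolding r_def using Kpos by simp
      have "K * (a' t)^2 + (b' t)^2 = (K * (a t)^2 + (b t)^2) / (r t)^2"
        unfolding a'_def b'_def by (simp add: power_divide add_divide_distrib)
      also have "\<dots> = 1" using rp[OF that] \<open>(r t)^2 = _\<close>[symmetric] by simp
      finally show ?thesis .
    qed
    have key: "(\<Prod>t\<in>T. a t) * (\<Prod>t\<in>{..<q}-T. b t) =
       (\<Prod>t<q. r t) * ((\<Prod>t\<in>T. a' t) * (\<Prod>t\<in>{..<q}-T. b' t))" if "T \<in> Pow {..<q}" for T
    proof -
      have fT: "finite T" using that finite_subset by auto
      have "(\<Prod>t\<in>T. a t) = (\<Prod>t\<in>T. r t * a' t)"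
        apply (rule prod.cong) using rp that unfolding a'_def by (auto dest!: subsetD[of T "{..<q}"] rp)
      also have "\<dots> = (\<Prod>t\<in>T. r t) * (\<Prod>t\<in>T. a' t)" by (simp add: prod.distrib)
      finally have 1: "(\<Prod>t\<in>T. a t) = (\<Prod>t\<in>T. r t) * (\<Prod>t\<in>T. a' t)" .
      have "(\<Prod>t\<in>{..<q}-T. b t) = (\<Prod>t\<in>{..<q}-T. r t * b' t)"
        apply (rule prod.cong) using rp that unfolding b'_def by (auto dest!: rp)
      also have "\<dots> = (\<Prod>t\<in>{..<q}-T. r t) * (\<Prod>t\<in>{..<q}-T. b' t)" by (simp add: prod.distrib)
      finally have 2: "(\<Prod>t\<in>{..<q}-T. b t) = (\<Prod>t\<in>{..<q}-T. r t) * (\<Prod>t\<in>{..<q}-T. b' t)" .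
      have 3: "(\<Prod>t<q. r t) = (\<Prod>t\<in>T. r t) * (\<Prod>t\<in>{..<q}-T. r t)"
        using prod.subset_diff[of T "{..<q}" r] that by (simp add: mult.commute)
      show ?thesis unfolding 1 2 3 by (simp add: algebra_simps)
    qed
    have a'0: "a' t \<ge> 0" for t unfolding a'_def using a0 r0 by simp
    have b'0: "b' t \<ge> 0" for t unfolding b'_def using b0 r0 by simp
    have "(\<Sum>T\<in>Pow {..<q}. (if card T = 1 then 0 else M^card T) *
            ((\<Prod>t\<in>T. a t) * (\<Prod>t\<in>{..<q}-T. b t))) =
          (\<Prod>t<q. r t) * (\<Sum>T\<in>Pow {..<q}. (if card T = 1 then 0 else M^card T) *
            ((\<Prod>t\<in>T. a' t) * (\<Prod>t\<in>{..<q}-T. b' t)))"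
      unfolding sum_distrib_left by (rule sum.cong) (auto simp: key)
    also have "\<dots> \<le> (\<Prod>t<q. r t) * 1"
      apply (rule mult_left_mono) apply (rule NI_norm[OF a'0 b'0 M1 K nrm]) using r0 by (auto simp: prod_nonneg)
    finally show ?thesis unfolding r_def by simp
  qed
qed



definition ev :: "nat set \<Rightarrow> (nat set \<Rightarrow> real) \<Rightarrow> (nat \<Rightarrow> real) \<Rightarrow> real" where
  "ev I c x = (\<Sum>S\<in>Pow I. c S * (\<Prod>i\<in>S. x i))"

definition wn :: "real \<Rightarrow> nat set \<Rightarrow> (nat set \<Rightarrow> real) \<Rightarrow> real" where
  "wn K I c = (\<Sum>S\<in>Pow I. K^card S * (c S)^2)"

lemma Pow_insert_split:
  assumes "finite J" "j \<notin> J"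
  shows "(\<Sum>S\<in>Pow (insert j J). f S) = (\<Sum>S\<in>Pow J. f (insert j S)) + (\<Sum>S\<in>Pow J. f S)"
proof -
  have "Pow (insert j J) = Pow J \<union> insert j ` Pow J" by (rule Pow_insert)
  moreover have "Pow J \<inter> insert j ` Pow J = {}" using assms(2) by auto
  moreover have "inj_on (insert j) (Pow J)" using assms(2) unfolding inj_on_def by (metis Diff_insert_absorb PowD subsetD)
  ultimately show ?thesis using assms(1)
    by (simp add: sum.union_disjoint sum.reindex add.commute)
qed

lemma ev_insert:
  assumes "finite J" "j \<notin> J"
  shows "ev (insert j J) c (x(j:=y)) = y * ev J (\<lambda>S. c (insert j S)) x + ev J c x"
proof -
  have 1: "(\<Prod>i\<in>insert j S. (x(j:=y)) i) = y * (\<Prod>i\<in>S. x i)" if "S \<in> Pow J" for S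
  proof -
    have fS: "finite S" "j \<notin> S" using that assms finite_subset by auto
    then have "(\<Prod>i\<in>insert j S. (x(j:=y)) i) = y * (\<Prod>i\<in>S. (x(j:=y)) i)" by simp
    also have "(\<Prod>i\<in>S. (x(j:=y)) i) = (\<Prod>i\<in>S. x i)" using fS by (intro prod.cong) auto
    finally show ?thesis .
  qed
  have 2: "(\<Prod>i\<in>S. (x(j:=y)) i) = (\<Prod>i\<in>S. x i)" if "S \<in> Pow J" for S
    using that assms by (intro prod.cong) auto
  have "(\<Sum>S\<in>Pow J. c (insert j S) * (\<Prod>i\<in>insert j S. (x(j:=y)) i)) = (\<Sum>S\<in>Pow J. y * (c (insert j S) * (\<Prod>i\<in>S. x i)))"
  proof (rule sum.cong[OF refl])
    fix S assume "S \<in> Pow J"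
    show "c (insert j S) * (\<Prod>i\<in>insert j S. (x(j:=y)) i) = y * (c (insert j S) * (\<Prod>i\<in>S. x i))"
      unfolding 1[OF \<open>S \<in> Pow J\<close>] by (simp add: algebra_simps)
  qed
  moreover have "(\<Sum>S\<in>Pow J. c S * (\<Prod>i\<in>S. (x(j:=y)) i)) = (\<Sum>S\<in>Pow J. c S * (\<Prod>i\<in>S. x i))"
  proof (rule sum.cong[OF refl])
    fix S assume "S \<in> Pow J"
    show "c S * (\<Prod>i\<in>S. (x(j:=y)) i) = c S * (\<Prod>i\<in>S. x i)"
      unfolding 2[OF \<open>S \<in> Pow J\<close>] by simp
  qed
  ultimately show ?thesis unfolding ev_def Pow_insert_split[OF assms]
    by (simp add: sum_distrib_left)
qed

lemma wn_insert:
  assumes "finite J" "j \<notin> J"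
  shows "wn K (insert j J) c = K * wn K J (\<lambda>S. c (insert j S)) + wn K J c"
proof -
  have "card (insert j S) = Suc (card S)" if "S \<in> Pow J" for S
    using that assms finite_subset by (auto intro: card_insert_disjoint)
  then have "(\<Sum>S\<in>Pow J. K^card (insert j S) * (c (insert j S))^2) = (\<Sum>S\<in>Pow J. K * (K^card S * (c (insert j S))^2))"
    by (intro sum.cong) auto
  then show ?thesis unfolding wn_def Pow_insert_split[OF assms]
    by (simp add: sum_distrib_left)
qed

lemma pair_exp:
  fixes f :: "'a \<times> 'b \<Rightarrow> real"
  assumes "finite (set_pmf p)" "finite (set_pmf q)"
  shows "measure_pmf.expectation (pair_pmf p q) f =
         measure_pmf.expectation p (\<lambda>a. measure_pmf.expectation q (\<lambda>b. f (a, b)))"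
proof -
  have "measure_pmf.expectation (pair_pmf p q) f = (\<Sum>z\<in>set_pmf p \<times> set_pmf q. f z * pmf (pair_pmf p q) z)"
    by (rule integral_measure_pmf_real) (use assms in auto)
  also have "\<dots> = (\<Sum>(a,b)\<in>set_pmf p \<times> set_pmf q. f (a,b) * pmf q b * pmf p a)"
    by (intro sum.cong) (auto simp: pmf_pair)
  also have "\<dots> = (\<Sum>a\<in>set_pmf p. \<Sum>b\<in>set_pmf q. f (a,b) * pmf q b * pmf p a)"
    by (simp add: sum.cartesian_product)
  also have "\<dots> = (\<Sum>a\<in>set_pmf p. (\<Sum>b\<in>set_pmf q. f (a, b) * pmf q b) * pmf p a)"
    by (simp add: sum_distrib_right)
  also have "\<dots> = (\<Sum>a\<in>set_pmf p. measure_pmf.expectation q (\<lambda>b. f (a, b)) * pmf p a)"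
    by (intro sum.cong refl arg_cong2[where f="(*)"]) (rule integral_measure_pmf_real[symmetric], use assms in auto)
  also have "\<dots> = measure_pmf.expectation p (\<lambda>a. measure_pmf.expectation q (\<lambda>b. f (a, b)))"
    by (rule integral_measure_pmf_real[symmetric]) (use assms in auto)
  finally show ?thesis .
qed

lemma finite_Pi_pmf_set:
  assumes "finite I" "finite (set_pmf X)"
  shows "finite (set_pmf (Pi_pmf I d (\<lambda>_. X)))"
  using assms by (simp add: set_Pi_pmf finite_PiE_dflt)



lemma abs_moment_bound:
  fixes X :: "real pmf"
  assumes fin: "finite (set_pmf X)" and bnd: "\<And>y. y \<in> set_pmf X \<Longrightarrow> \<bar>y\<bar> \<le> M"
  shows "\<bar>measure_pmf.expectation X (\<lambda>y. y^n)\<bar> \<le> M^n"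
proof -
  have "\<bar>measure_pmf.expectation X (\<lambda>y. y^n)\<bar> \<le> measure_pmf.expectation X (\<lambda>y. \<bar>y^n\<bar>)"
    by (rule integral_abs_bound)
  also have "\<dots> \<le> M^n"
  proof (rule measure_pmf.integral_le_const)
    show "integrable (measure_pmf X) (\<lambda>y. \<bar>y^n\<bar>)" by (rule integrable_measure_pmf_finite[OF fin])
    show "AE y in measure_pmf X. \<bar>y^n\<bar> \<le> M^n"
      unfolding AE_measure_pmf_iff using bnd by (auto simp: power_abs intro: power_mono)
  qed
  finally show ?thesis .
qed

lemma main_bound:
  fixes X :: "real pmf" and M K :: real and q :: nat and I :: "nat set"
  assumes fin: "finite (set_pmf X)" and bnd: "\<And>y. y \<in> set_pmf X \<Longrightarrow> \<bar>y\<bar> \<le> M" and M1: "M \<ge> 1"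
    and mean: "measure_pmf.expectation X (\<lambda>y. y) = 0" and K: "K \<ge> 2^(q+1)*M^q" and I: "finite I"
  shows "\<bar>measure_pmf.expectation (Pi_pmf I 0 (\<lambda>_. X)) (\<lambda>x. \<Prod>t<q. ev I (c t) x)\<bar>
           \<le> (\<Prod>t<q. sqrt (wn K I (c t)))"
  using I
proof (induction I arbitrary: c rule: finite_induct)
  case empty
  have "\<bar>\<Prod>t<q. c t {}\<bar> = (\<Prod>t<q. sqrt ((c t {})^2))" by (simp add: abs_prod)
  then show ?case by (simp add: ev_def wn_def)
next
  case (insert j J c)
  have Kpos: "K \<ge> 1"
  proof -
    have "(1::real) \<le> 2^(q+1)" by (rule one_le_power) simp
    moreover have "1 \<le> M^q" using M1 by simp
    ultimately have "1 \<le> (2::real)^(q+1) * M^q" by (metis mult_mono one_le_numeral one_le_power mult_1 order_trans zero_le_one)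
    then show ?thesis using K by linarith
  qed
  have wn0: "wn K J f \<ge> 0" for f unfolding wn_def using Kpos by (auto intro!: sum_nonneg)
  define P where "P = Pi_pmf J 0 (\<lambda>_. X)"
  have finP: "finite (set_pmf P)" unfolding P_def by (rule finite_Pi_pmf_set[OF insert(1) fin])
  define A where "A t = (\<lambda>S. c t (insert j S))" for t
  define cc where "cc T t = (if t \<in> T then A t else c t)" for T t
  define G where "G T x = (\<Prod>t<q. ev J (cc T t) x)" for T x
  define e where "e T = measure_pmf.expectation P (G T)" for T
  define m where "m T = measure_pmf.expectation X (\<lambda>y. y ^ card T)" for T :: "nat set"
  have step2: "(\<Prod>t<q. (y * ev J (A t) x + ev J (c t) x)) = (\<Sum>T\<in>Pow {..<q}. y^card T * G T x)" for y x
  proof -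
    have "(\<Prod>t<q. (y * ev J (A t) x + ev J (c t) x)) =
       (\<Sum>T\<in>Pow {..<q}. (\<Prod>t\<in>T. y * ev J (A t) x) * (\<Prod>t\<in>{..<q}-T. ev J (c t) x))"
      by (rule prod_add) simp
    also have "\<dots> = (\<Sum>T\<in>Pow {..<q}. y^card T * G T x)"
    proof (rule sum.cong[OF refl])
      fix T assume T: "T \<in> Pow {..<q}"
      have "G T x = (\<Prod>t<q. if t \<in> T then ev J (A t) x else ev J (c t) x)"
        unfolding G_def cc_def by (intro prod.cong) auto
      also have "\<dots> = (\<Prod>t\<in>{..<q} \<inter> {t. t \<in> T}. ev J (A t) x) * (\<Prod>t\<in>{..<q} \<inter> - {t. t \<in> T}. ev J (c t) x)"
        by (rule prod.If_cases) simp
      also have "{..<q} \<inter> {t. t \<in> T} = T" using T by auto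
      also have "{..<q} \<inter> - {t. t \<in> T} = {..<q} - T" by auto
      finally have "G T x = (\<Prod>t\<in>T. ev J (A t) x) * (\<Prod>t\<in>{..<q} - T. ev J (c t) x)" .
      moreover have "(\<Prod>t\<in>T. y * ev J (A t) x) = y ^ card T * (\<Prod>t\<in>T. ev J (A t) x)"
        by (simp add: prod.distrib)
      ultimately show "(\<Prod>t\<in>T. y * ev J (A t) x) * (\<Prod>t\<in>{..<q}-T. ev J (c t) x) = y^card T * G T x"
        by simp
    qed
    finally show ?thesis .
  qed
  have "measure_pmf.expectation (Pi_pmf (insert j J) 0 (\<lambda>_. X)) (\<lambda>x. \<Prod>t<q. ev (insert j J) (c t) x)
      = measure_pmf.expectation (pair_pmf X P) (\<lambda>(y, f). \<Prod>t<q. ev (insert j J) (c t) (f(j:=y)))"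
    unfolding Pi_pmf_insert[OF insert(1,2)] P_def by (simp add: case_prod_beta')
  also have "\<dots> = measure_pmf.expectation X (\<lambda>y. measure_pmf.expectation P
        (\<lambda>x. \<Prod>t<q. ev (insert j J) (c t) (x(j:=y))))"
    by (subst pair_exp[OF fin finP]) simp
  also have "\<dots> = measure_pmf.expectation X (\<lambda>y. measure_pmf.expectation P
        (\<lambda>x. \<Sum>T\<in>Pow {..<q}. y^card T * G T x))"
    unfolding ev_insert[OF insert(1,2)] A_def[symmetric] step2 by (rule refl)
  also have "\<dots> = measure_pmf.expectation X (\<lambda>y. \<Sum>T\<in>Pow {..<q}. y^card T * e T)"
  proof -
    have "measure_pmf.expectation P (\<lambda>x. \<Sum>T\<in>Pow {..<q}. y^card T * G T x) = (\<Sum>T\<in>Pow {..<q}. y^card T * e T)" for y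
    proof -
      have "measure_pmf.expectation P (\<lambda>x. \<Sum>T\<in>Pow {..<q}. y^card T * G T x) =
        (\<Sum>T\<in>Pow {..<q}. measure_pmf.expectation P (\<lambda>x. y^card T * G T x))"
        by (rule Bochner_Integration.integral_sum) (rule integrable_measure_pmf_finite[OF finP])
      then show ?thesis by (simp add: e_def)
    qed
    then show ?thesis by simp
  qed
  also have "\<dots> = (\<Sum>T\<in>Pow {..<q}. m T * e T)"
  proof -
    have "measure_pmf.expectation X (\<lambda>y. \<Sum>T\<in>Pow {..<q}. y^card T * e T) =
        (\<Sum>T\<in>Pow {..<q}. measure_pmf.expectation X (\<lambda>y. y^card T * e T))"
      by (rule Bochner_Integration.integral_sum) (rule integrable_measure_pmf_finite[OF fin])
    then show ?thesis by (simp add: m_def)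
  qed
  finally have eq: "measure_pmf.expectation (Pi_pmf (insert j J) 0 (\<lambda>_. X)) (\<lambda>x. \<Prod>t<q. ev (insert j J) (c t) x)
      = (\<Sum>T\<in>Pow {..<q}. m T * e T)" .
  define \<alpha> where "\<alpha> t = sqrt (wn K J (A t))" for t
  define \<beta> where "\<beta> t = sqrt (wn K J (c t))" for t
  have bnd_T: "\<bar>m T * e T\<bar> \<le> (if card T = 1 then 0 else M^card T) *
            ((\<Prod>t\<in>T. \<alpha> t) * (\<Prod>t\<in>{..<q}-T. \<beta> t))" if T: "T \<in> Pow {..<q}" for T
  proof -
    have mT: "\<bar>m T\<bar> \<le> (if card T = 1 then 0 else M^card T)"
    proof (cases "card T = 1")
      case True
      then show ?thesis using mean unfolding m_def by simp
    next
      case False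
      then show ?thesis unfolding m_def using abs_moment_bound[OF fin bnd] by simp
    qed
    have "\<bar>e T\<bar> \<le> (\<Prod>t<q. sqrt (wn K J (cc T t)))"
      unfolding e_def G_def P_def by (rule insert.IH)
    also have "\<dots> = (\<Prod>t<q. if t \<in> T then \<alpha> t else \<beta> t)"
      unfolding cc_def \<alpha>_def \<beta>_def by (intro prod.cong) auto
    also have "\<dots> = (\<Prod>t\<in>{..<q} \<inter> {t. t \<in> T}. \<alpha> t) * (\<Prod>t\<in>{..<q} \<inter> - {t. t \<in> T}. \<beta> t)"
      by (rule prod.If_cases) simp
    also have "{..<q} \<inter> {t. t \<in> T} = T" using T by auto
    also have "{..<q} \<inter> - {t. t \<in> T} = {..<q} - T" by auto
    finally have eT: "\<bar>e T\<bar> \<le> (\<Prod>t\<in>T. \<alpha> t) * (\<Prod>t\<in>{..<q} - T. \<beta> t)" .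
    show ?thesis unfolding abs_mult
      by (rule mult_mono[OF mT eT]) (use M1 in auto)
  qed
  have "\<bar>\<Sum>T\<in>Pow {..<q}. m T * e T\<bar> \<le> (\<Sum>T\<in>Pow {..<q}. \<bar>m T * e T\<bar>)" by (rule sum_abs)
  also have "\<dots> \<le> (\<Sum>T\<in>Pow {..<q}. (if card T = 1 then 0 else M^card T) *
            ((\<Prod>t\<in>T. \<alpha> t) * (\<Prod>t\<in>{..<q}-T. \<beta> t)))"
    by (rule sum_mono) (rule bnd_T)
  also have "\<dots> \<le> (\<Prod>t<q. sqrt (K * (\<alpha> t)^2 + (\<beta> t)^2))"
    by (rule NI[OF _ _ M1 K]) (auto simp: \<alpha>_def \<beta>_def wn0)
  also have "\<dots> = (\<Prod>t<q. sqrt (wn K (insert j J) (c t)))"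
    unfolding wn_insert[OF insert(1,2)] \<alpha>_def \<beta>_def A_def using wn0 by simp
  finally show ?case unfolding eq .
qed



lemma wn_le:
  assumes "is_mlpoly N d c" "K \<ge> 1"
  shows "sqrt (wn K {..<N} c) \<le> sqrt (K^d) * coeff_norm N c"
proof -
  have "wn K {..<N} c \<le> (\<Sum>S\<in>Pow {..<N}. K^d * (c S)^2)"
    unfolding wn_def
  proof (rule sum_mono)
    fix S assume "S \<in> Pow {..<N}"
    show "K ^ card S * (c S)\<^sup>2 \<le> K ^ d * (c S)\<^sup>2"
    proof (cases "c S = 0")
      case False
      then have "card S \<le> d" using assms(1) unfolding is_mlpoly_def by auto
      then have "K ^ card S \<le> K ^ d" using power_increasing assms(2) by blast
      then show ?thesis by (rule mult_right_mono) simp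
    qed simp
  qed
  also have "\<dots> = K^d * (\<Sum>S\<in>Pow {..<N}. (c S)^2)" by (simp add: sum_distrib_left)
  finally have "sqrt (wn K {..<N} c) \<le> sqrt (K^d * (\<Sum>S\<in>Pow {..<N}. (c S)^2))" by simp
  then show ?thesis unfolding coeff_norm_def by (simp add: real_sqrt_mult)
qed

lemma expect_poly:
  "measure_pmf.expectation (poly_dist X n c) (\<lambda>y. y^i) =
   measure_pmf.expectation (Pi_pmf {..<n} 0 (\<lambda>_. X)) (\<lambda>x. (ev {..<n} c x)^i)"
  unfolding poly_dist_def mpoly_eval_def ev_def by simp

lemma lift:
  assumes "n \<le> N" "is_mlpoly n d c"
  shows "measure_pmf.expectation (Pi_pmf {..<n} 0 (\<lambda>_. X)) (\<lambda>x. (ev {..<n} c x)^i) =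
         measure_pmf.expectation (Pi_pmf {..<N} 0 (\<lambda>_. X)) (\<lambda>x. (ev {..<N} c x)^i)"
proof -
  have sub: "{..<n} \<subseteq> {..<N}" using assms(1) by auto
  have e: "ev {..<n} c (\<lambda>x. if x < n then f x else 0) = ev {..<N} c f" for f
  proof -
    have "ev {..<n} c (\<lambda>x. if x < n then f x else 0) = (\<Sum>S\<in>Pow {..<n}. c S * (\<Prod>i\<in>S. f i))"
      unfolding ev_def by (intro sum.cong refl arg_cong2[where f="(*)"] prod.cong) auto
    also have "\<dots> = ev {..<N} c f"
      unfolding ev_def
    proof (rule sum.mono_neutral_left)
      show "\<forall>S\<in>Pow {..<N} - Pow {..<n}. c S * prod f S = 0"
        using assms(2) unfolding is_mlpoly_def by auto
    qed (use sub in auto)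
    finally show ?thesis .
  qed
  show ?thesis
    unfolding Pi_pmf_subset[OF finite_lessThan sub, of 0 "\<lambda>_. X"] by (simp add: e)
qed

lemma ev_diff: "ev I (\<lambda>S. a S - b S) x = ev I a x - ev I b x"
  unfolding ev_def by (simp add: left_diff_distrib sum_subtractf)

lemma prod_split:
  fixes f g h :: real
  assumes "j < i"
  shows "(\<Prod>t<i. (if t = 0 then f else if t \<le> j then g else h)) = f * g^j * h^(i-1-j)"
proof -
  obtain i' where i': "i = Suc i'" using assms by (cases i) auto
  have ji: "j \<le> i'" using assms i' by simp
  have "(\<Prod>t<i. (if t = 0 then f else if t \<le> j then g else h)) =
        f * (\<Prod>t<i'. (if t < j then g else h))"
    unfolding i' prod.lessThan_Suc_shift by (simp add: Suc_le_eq)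
  also have "(\<Prod>t<i'. (if t < j then g else h)) =
     (\<Prod>t\<in>{..<i'} \<inter> {t. t < j}. g) * (\<Prod>t\<in>{..<i'} \<inter> - {t. t < j}. h)"
    by (rule prod.If_cases) simp
  also have "{..<i'} \<inter> {t. t < j} = {..<j}" using ji by auto
  also have "{..<i'} \<inter> - {t. t < j} = {j..<i'}" by auto
  finally show ?thesis using i' by simp
qed



theorem lemma9p7:
  fixes X :: "real pmf" and d k :: nat
  assumes "finite (set_pmf X)"
    and "measure_pmf.expectation X (\<lambda>x. x) = 0"
    and "measure_pmf.variance X (\<lambda>x. x) = 1"
    and "k \<ge> 1"
  shows "\<exists>\<xi>::real. \<forall>s N q1 q2 \<eta>.
           N \<ge> d * s \<and> is_mlpoly (d * s) d q1 \<and> coeff_norm N q1 = 1 \<and>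
           is_mlpoly N d q2 \<and> coeff_norm N (\<lambda>S. q1 S - q2 S) \<le> \<eta> \<and> \<eta> \<le> 1
           \<longrightarrow> Mom k (poly_dist X (d * s) q1) (poly_dist X N q2) \<le> \<xi> * \<eta>"
proof -
  note fin = assms(1) and mean = assms(2)
  define M where "M = Max (insert 1 (abs ` set_pmf X))"
  have M1: "M \<ge> 1" unfolding M_def using fin by simp
  have bnd: "\<bar>y\<bar> \<le> M" if "y \<in> set_pmf X" for y
    unfolding M_def using fin that by (intro Max_ge) auto
  define K :: real where "K = 2^(k+1) * M^k"
  have Ki: "K \<ge> 2^(i+1) * M^i" if "i \<le> k" for i
    unfolding K_def
  proof (rule mult_mono)
    show "(2::real)^(i+1) \<le> 2^(k+1)" by (rule power_increasing) (use that in auto)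
    show "M^i \<le> M^k" by (rule power_increasing) (use that M1 in auto)
  qed (use M1 in auto)
  have K1: "K \<ge> 1"
  proof -
    have "(1::real) \<le> 2^(0+1) * M^0" by simp
    then show ?thesis using Ki[of 0] by linarith
  qed
  define L where "L = sqrt (K^d)"
  have L1: "L \<ge> 1" unfolding L_def using K1 by simp
  define C where "C = real k * (2*L)^k"
  have C0: "C \<ge> 0" unfolding C_def using L1 by simp
  show ?thesis
  proof (intro exI[of _ "sqrt (real k) * C"] allI impI, elim conjE)
    fix s N q1 q2 and \<eta> :: real
    assume N: "d * s \<le> N" and q1: "is_mlpoly (d * s) d q1" and n1: "coeff_norm N q1 = 1"
      and q2: "is_mlpoly N d q2" and nD: "coeff_norm N (\<lambda>S. q1 S - q2 S) \<le> \<eta>" and e1: "\<eta> \<le> 1"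
    define D where "D = (\<lambda>S. q1 S - q2 S)"
    define I where "I = {..<N}"
    define P where "P = Pi_pmf I 0 (\<lambda>_. X)"
    have finP: "finite (set_pmf P)" unfolding P_def I_def by (rule finite_Pi_pmf_set[OF _ fin]) simp
    have e0: "\<eta> \<ge> 0" using nD unfolding coeff_norm_def by (meson order_trans real_sqrt_ge_zero sum_nonneg zero_le_power2)
    have q1N: "is_mlpoly N d q1" using q1 N unfolding is_mlpoly_def by (meson lessThan_subset_iff order_trans)
    have DN: "is_mlpoly N d D" using q1N q2 unfolding is_mlpoly_def D_def by (metis diff_self)
    have n2: "coeff_norm N q2 \<le> 2"
    proof -
      have "coeff_norm N q2 = L2_set (\<lambda>S. q1 S + (- D S)) (Pow {..<N})"
        unfolding coeff_norm_def L2_set_def D_def by simp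
      also have "\<dots> \<le> L2_set q1 (Pow {..<N}) + L2_set (\<lambda>S. - D S) (Pow {..<N})"
        by (rule L2_set_triangle_ineq)
      also have "L2_set (\<lambda>S. - D S) (Pow {..<N}) = coeff_norm N D"
        unfolding coeff_norm_def L2_set_def by simp
      also have "L2_set q1 (Pow {..<N}) = 1" using n1 unfolding coeff_norm_def L2_set_def by simp
      finally show ?thesis using nD e1 unfolding D_def by linarith
    qed
    have wn0: "wn K I f \<ge> 0" for f using K1 unfolding wn_def by (auto intro!: sum_nonneg)
    have s1: "sqrt (wn K I q1) \<le> L" using wn_le[OF q1N K1] n1 unfolding I_def L_def by simp
    have s2: "sqrt (wn K I q2) \<le> 2 * L"
    proof -
      have "L * coeff_norm N q2 \<le> L * 2" by (rule mult_left_mono[OF n2]) (use L1 in simp)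
      then show ?thesis using wn_le[OF q2 K1] unfolding I_def L_def by linarith
    qed
    have sD: "sqrt (wn K I D) \<le> L * \<eta>"
    proof -
      have "L * coeff_norm N D \<le> L * \<eta>" by (rule mult_left_mono) (use L1 nD D_def in auto)
      then show ?thesis using wn_le[OF DN K1] unfolding I_def L_def by linarith
    qed
    have diff: "\<bar>measure_pmf.expectation (poly_dist X (d * s) q1) (\<lambda>y. y^i) -
              measure_pmf.expectation (poly_dist X N q2) (\<lambda>y. y^i)\<bar> \<le> C * \<eta>"
      if i: "i \<in> {1..k}" for i
    proof -
      define cc where "cc j t = (if t = 0 then D else if t \<le> j then q1 else q2)" for j t :: nat
      have "measure_pmf.expectation (poly_dist X (d * s) q1) (\<lambda>y. y^i) -
              measure_pmf.expectation (poly_dist X N q2) (\<lambda>y. y^i)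
          = measure_pmf.expectation P (\<lambda>x. (ev I q1 x)^i) - measure_pmf.expectation P (\<lambda>x. (ev I q2 x)^i)"
        unfolding expect_poly lift[OF N q1] P_def I_def ..
      also have "\<dots> = measure_pmf.expectation P (\<lambda>x. (ev I q1 x)^i - (ev I q2 x)^i)"
        by (rule Bochner_Integration.integral_diff[symmetric]) (auto intro: integrable_measure_pmf_finite[OF finP])
      also have "\<dots> = measure_pmf.expectation P (\<lambda>x. \<Sum>j<i. \<Prod>t<i. ev I (cc j t) x)"
      proof -
        have "(ev I q1 x)^i - (ev I q2 x)^i = (\<Sum>j<i. \<Prod>t<i. ev I (cc j t) x)" for x
        proof -
          have "(ev I q1 x)^i - (ev I q2 x)^i = (ev I q1 x - ev I q2 x) * (\<Sum>j<i. (ev I q2 x)^(i - Suc j) * (ev I q1 x)^j)"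
            by (rule power_diff_sumr2)
          also have "\<dots> = (\<Sum>j<i. ev I D x * (ev I q1 x)^j * (ev I q2 x)^(i - 1 - j))"
            unfolding D_def ev_diff sum_distrib_left by (intro sum.cong refl) (simp add: algebra_simps)
          also have "\<dots> = (\<Sum>j<i. \<Prod>t<i. ev I (cc j t) x)"
          proof (rule sum.cong[OF refl])
            fix j assume "j \<in> {..<i}"
            then have "j < i" by simp
            have "(\<Prod>t<i. ev I (cc j t) x) = (\<Prod>t<i. (if t = 0 then ev I D x else if t \<le> j then ev I q1 x else ev I q2 x))"
              unfolding cc_def by (intro prod.cong) auto
            also have "\<dots> = ev I D x * (ev I q1 x)^j * (ev I q2 x)^(i - 1 - j)"
              by (rule prod_split[OF \<open>j < i\<close>])
            finally show "ev I D x * (ev I q1 x)^j * (ev I q2 x)^(i - 1 - j) = (\<Prod>t<i. ev I (cc j t) x)" ..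
          qed
          finally show ?thesis .
        qed
        then show ?thesis by simp
      qed
      also have "\<dots> = (\<Sum>j<i. measure_pmf.expectation P (\<lambda>x. \<Prod>t<i. ev I (cc j t) x))"
        by (rule Bochner_Integration.integral_sum) (rule integrable_measure_pmf_finite[OF finP])
      finally have eq: "measure_pmf.expectation (poly_dist X (d * s) q1) (\<lambda>y. y^i) -
              measure_pmf.expectation (poly_dist X N q2) (\<lambda>y. y^i) =
           (\<Sum>j<i. measure_pmf.expectation P (\<lambda>x. \<Prod>t<i. ev I (cc j t) x))" .
      have tb: "\<bar>measure_pmf.expectation P (\<lambda>x. \<Prod>t<i. ev I (cc j t) x)\<bar> \<le> (2*L)^k * \<eta>" if j: "j < i" for j
      proof -
        have "\<bar>measure_pmf.expectation P (\<lambda>x. \<Prod>t<i. ev I (cc j t) x)\<bar> \<le> (\<Prod>t<i. sqrt (wn K I (cc j t)))"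
          unfolding P_def by (rule main_bound[OF fin bnd M1 mean Ki]) (use i in \<open>auto simp: I_def\<close>)
        also have "\<dots> = (\<Prod>t<i. (if t = 0 then sqrt (wn K I D) else if t \<le> j then sqrt (wn K I q1) else sqrt (wn K I q2)))"
          unfolding cc_def by (intro prod.cong) auto
        also have "\<dots> = sqrt (wn K I D) * sqrt (wn K I q1)^j * sqrt (wn K I q2)^(i - 1 - j)"
          by (rule prod_split[OF j])
        also have "\<dots> \<le> (2 * L * \<eta>) * (2*L)^j * (2*L)^(i - 1 - j)"
        proof (intro mult_mono power_mono)
          show "sqrt (wn K I D) \<le> 2 * L * \<eta>" 
          proof -
            have "L * \<eta> \<ge> 0" using L1 e0 by simp
            then show ?thesis using sD by linarith
          qed
          show "sqrt (wn K I q1) \<le> 2 * L" using s1 L1 by simp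
          show "sqrt (wn K I q2) \<le> 2 * L" using s2 .
        qed (use L1 e0 wn0 in auto)
        also have "\<dots> = (2*L)^(1 + j + (i - 1 - j)) * \<eta>" by (simp add: power_add algebra_simps)
        also have "1 + j + (i - 1 - j) = i" using j by simp
        also have "(2*L)^i * \<eta> \<le> (2*L)^k * \<eta>"
          by (rule mult_right_mono[OF power_increasing]) (use i L1 e0 in auto)
        finally show ?thesis .
      qed
      have "\<bar>\<Sum>j<i. measure_pmf.expectation P (\<lambda>x. \<Prod>t<i. ev I (cc j t) x)\<bar>
              \<le> (\<Sum>j<i. \<bar>measure_pmf.expectation P (\<lambda>x. \<Prod>t<i. ev I (cc j t) x)\<bar>)" by (rule sum_abs)
      also have "\<dots> \<le> (\<Sum>j<i. (2*L)^k * \<eta>)" by (rule sum_mono) (use tb in auto)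
      also have "\<dots> = real i * ((2*L)^k * \<eta>)" by simp
      also have "\<dots> \<le> real k * ((2*L)^k * \<eta>)"
        by (rule mult_right_mono) (use i L1 e0 in auto)
      finally show ?thesis unfolding eq C_def by (simp add: algebra_simps)
    qed
    have "Mom k (poly_dist X (d * s) q1) (poly_dist X N q2) \<le> sqrt (\<Sum>i=1..k. (C * \<eta>)^2)"
      unfolding Mom_def
    proof (rule real_sqrt_le_mono, rule sum_mono)
      fix i assume "i \<in> {1..k}"
      from diff[OF this] show "(measure_pmf.expectation (poly_dist X (d * s) q1) (\<lambda>y. y^i) -
              measure_pmf.expectation (poly_dist X N q2) (\<lambda>y. y^i))^2 \<le> (C * \<eta>)^2"
        using power_mono[OF _ abs_ge_zero, of _ "C * \<eta>" 2] by simp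
    qed
    also have "\<dots> = sqrt (real k) * (C * \<eta>)" using C0 e0 by (simp add: real_sqrt_mult)
    finally show "Mom k (poly_dist X (d * s) q1) (poly_dist X N q2) \<le> sqrt (real k) * C * \<eta>"
      by (simp add: mult.assoc)
  qed
qed

end
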